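(* Let $T=\{0,\dots,N\}$ and $\mathbb{F}$ a field. Let $C_\bullet$, $C'_\bullet$ be filtrations of finite-dimensional chain complexes $C$, $C'$ over $\mathbb{F}$ with filtration compatible ordered bases $\mathfrak{C}=(c_1,\dots,c_n)$, $\mathfrak{C}'=(c'_1,\dots,c'_n)$ and filtration boundary matrices $D$, $D'$. Let $\varphi_\bullet\colon C_\bullet\to C'_\bullet$ be an injective morphism of filtrations of chain complexes with $\varphi=\varphi_N$ an isomorphism, $F$ its matrix with respect to $\mathfrak{C},\mathfrak{C}'$, and $D^{\varphi}=DF^{-1}=F^{-1}D'$. Let $V$, $V^{\varphi}$ be invertible upper-triangular matrices such that $R=DV$ and $R^{\varphi}=D^{\varphi}V^{\varphi}$ are reduced; interpret columns of $R,V,R^{\varphi}$ as coordinate vectors with respect to $\mathfrak{C}$ (elements of $C$) and columns of $FR^{\varphi}$ and $FV$ as coordinate vectors with respect to $\mathfrak{C}'$ (elements of $C'$). Then the family \[ \mathfrak{Z}=\operatorname{cols}FR^{\varphi}\cup\{Fv_j\mid r_j=0 \text{ and } j\notin\operatorname{pivs}R^{\varphi}\} \] is a filtration compatible basis for the filtration $\varphi_\bullet(Z_*(C_\bullet))$, $t\mapsto\varphi_t(\ker\partial|_{C_t})$, and for all $z\in\mathfrak{Z}$, \[ \operatorname{supp}_{\varphi_\bullet(Z_*(C_\bullet))}(z)=\operatorname{supp}_{C_\bullet}(F^{-1}z). \]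
   Context: A chain complex is a finite-dimensional graded vector space with differential $\partial$ of degree $-1$, $\partial^2=0$; a filtration of chain complexes is a chain of subcomplexes $C_0\subseteq\dots\subseteq C_N=C$. Support: $\operatorname{supp}_{M_\bullet}(m)=\{t\mid m\in M_t\}$. A basis $\mathfrak{M}$ of $M_N$ is filtration compatible if $\mathfrak{M}\cap M_t$ is a basis of $M_t$ for all $t$; an ordered such basis is a filtration compatible ordered basis if $m\le m'$ implies $\operatorname{supp}(m')\subseteq\operatorname{supp}(m)$. The filtration boundary matrix is the matrix of $\partial$ in that basis. For a matrix $X$, $x_j$ is its $j$-th column, $\operatorname{cols}X$ the family of its nonzero columns; $\operatorname{piv}x_j$ is the largest row index of a nonzero entry of a nonzero column; $\operatorname{pivs}X$ is the set of all pivots of nonzero columns; $X$ is reduced if no two nonzero columns have the same pivot. *)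

theory Defs
  imports "HOL-Analysis.Analysis"
begin

text \<open>Coordinates: a finite-dimensional space with an ordered basis (c_1,...,c_n) is
  represented as 'a^'n, the basis being the standard basis axis j 1, ordered by the
  linear order on the finite index type 'n. Linear maps are given by their matrices
  (type 'a^'n^'n, entry A$i$j = row i, column j). The time index set is T = {0..N}.\<close>

definition chain_complex :: "('a::field)^'n^'n \<Rightarrow> bool" where
  "chain_complex D \<longleftrightarrow> D ** D = 0"

text \<open>A filtration of chain complexes C_0 \<subseteq> ... \<subseteq> C_N = C by subcomplexes
  (differential x \<mapsto> D *v x).\<close>
definition filtration_cc :: "nat \<Rightarrow> ('a::field)^'n^'n \<Rightarrow> (nat \<Rightarrow> ('a^'n) set) \<Rightarrow> bool" where
  "filtration_cc N D C \<longleftrightarrow> chain_complex D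
     \<and> (\<forall>t\<le>N. vec.subspace (C t) \<and> (\<forall>x\<in>C t. D *v x \<in> C t))
     \<and> (\<forall>t<N. C t \<subseteq> C (Suc t)) \<and> C N = UNIV"

definition supp :: "nat \<Rightarrow> (nat \<Rightarrow> 'v set) \<Rightarrow> 'v \<Rightarrow> nat set" where
  "supp N M m = {t. t \<le> N \<and> m \<in> M t}"

text \<open>A family b indexed by I is a filtration compatible basis of the filtration M:
  it is a basis of M_N and its subfamily of members lying in M_t is a basis of M_t.\<close>
definition filt_compat_basis ::
  "nat \<Rightarrow> (nat \<Rightarrow> ('a::field^'n) set) \<Rightarrow> 'i set \<Rightarrow> ('i \<Rightarrow> 'a^'n) \<Rightarrow> bool" where
  "filt_compat_basis N M I b \<longleftrightarrow> inj_on b I \<and>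
     (\<forall>t\<le>N. vec.independent (b ` {i\<in>I. b i \<in> M t}) \<and> vec.span (b ` {i\<in>I. b i \<in> M t}) = M t)"

definition filt_compat_ordered_basis ::
  "nat \<Rightarrow> (nat \<Rightarrow> ('a::field^'n::{finite,linorder}) set) \<Rightarrow> ('n::{finite,linorder} \<Rightarrow> 'a^'n::{finite,linorder}) \<Rightarrow> bool" where
  "filt_compat_ordered_basis N M b \<longleftrightarrow> filt_compat_basis N M UNIV b \<and>
     (\<forall>j j'. j \<le> j' \<longrightarrow> supp N M (b j') \<subseteq> supp N M (b j))"

text \<open>Injective morphism of filtrations of chain complexes, given by the matrix F of
  \<phi> = \<phi>_N; \<phi>_t is the restriction of \<phi> to C_t.\<close>
definition inj_filt_morphism ::
  "nat \<Rightarrow> ('a::field)^'n^'n \<Rightarrow> (nat \<Rightarrow> ('a^'n) set) \<Rightarrow> 'a^'n^'n \<Rightarrow> (nat \<Rightarrow> ('a^'n) set)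
    \<Rightarrow> 'a^'n^'n \<Rightarrow> bool" where
  "inj_filt_morphism N D C D' C' F \<longleftrightarrow> F ** D = D' ** F
     \<and> (\<forall>t\<le>N. (\<forall>x\<in>C t. F *v x \<in> C' t) \<and> inj_on ((*v) F) (C t))"

definition piv :: "('a::zero)^'n::{finite,linorder} \<Rightarrow> 'n" where
  "piv x = Max {i. x $ i \<noteq> 0}"

definition pivs :: "('a::zero)^'n^'m::{finite,linorder} \<Rightarrow> 'm set" where
  "pivs X = {piv (column j X) | j. column j X \<noteq> 0}"

definition reduced :: "('a::zero)^'n^'m::{finite,linorder} \<Rightarrow> bool" where
  "reduced X \<longleftrightarrow> (\<forall>j k. column j X \<noteq> 0 \<longrightarrow> column k X \<noteq> 0 \<longrightarrow>
      piv (column j X) = piv (column k X) \<longrightarrow> j = k)"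

definition upper_triangular :: "('a::zero)^'n::{finite,linorder}^'n::{finite,linorder} \<Rightarrow> bool" where
  "upper_triangular V \<longleftrightarrow> (\<forall>i j. j < i \<longrightarrow> V $ i $ j = 0)"

end

theory Submission imports Defs begin

lemma minv: fixes A :: "'a::field^'n^'n" assumes "invertible A"
  shows "A ** matrix_inv A = mat 1" "matrix_inv A ** A = mat 1"
  using someI_ex[OF assms[unfolded invertible_def]] unfolding matrix_inv_def by auto

lemma column_mult: "column j (A ** B) = A *v column j (B::'a::comm_semiring_1^'n^'m)"
  by (simp add: column_def matrix_matrix_mult_def matrix_vector_mult_def vec_eq_iff)

lemma mv_axis: "(A *v axis k (1::'a::comm_semiring_1)) $ i = A $ i $ k"
  by (simp add: matrix_vector_mult_def axis_def if_distrib cong: if_cong)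

lemma piv_nz: fixes x :: "'a::zero^'n::{finite,linorder}"
  assumes "x \<noteq> 0" shows "x $ piv x \<noteq> 0"
proof -
  have "{i. x$i \<noteq> 0} \<noteq> {}" using assms by (auto simp: vec_eq_iff)
  then have "piv x \<in> {i. x$i \<noteq> 0}" unfolding piv_def by (intro Max_in) auto
  thus ?thesis by simp
qed

lemma piv_le: fixes x :: "'a::zero^'n::{finite,linorder}"
  shows "x $ k \<noteq> 0 \<Longrightarrow> k \<le> piv x"
  unfolding piv_def by (rule Max_ge) auto

lemma piv_above: fixes x :: "'a::zero^'n::{finite,linorder}"
  assumes "piv x < k" shows "x $ k = 0"
proof (rule ccontr)
  assume "x $ k \<noteq> 0" then have "k \<le> piv x" by (rule piv_le)
  with assms show False by simp
qed

lemma piv_eqI: fixes x :: "'a::zero^'n::{finite,linorder}"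
  assumes "x $ m \<noteq> 0" "\<And>k. m < k \<Longrightarrow> x$k = 0" shows "piv x = m"
  unfolding piv_def by (rule Max_eqI) (use assms in \<open>auto simp: not_less[symmetric]\<close>)

lemma piv_indep:
  fixes f :: "'j \<Rightarrow> 'a::field^'n::{finite,linorder}"
  assumes fin: "finite J" and nz: "\<forall>l\<in>J. f l \<noteq> 0" and inj: "inj_on (\<lambda>l. piv (f l)) J"
    and s: "(\<Sum>l\<in>J. c l *s f l) = 0"
  shows "\<forall>l\<in>J. c l = 0"
proof (rule ccontr)
  assume nt: "\<not> (\<forall>l\<in>J. c l = 0)"
  define J' where "J' = {l\<in>J. c l \<noteq> 0}"
  have ne: "J' \<noteq> {}" and fJ': "finite J'" using nt fin by (auto simp: J'_def)
  define p where "p = Max ((\<lambda>l. piv (f l)) ` J')"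
  have "p \<in> (\<lambda>l. piv (f l)) ` J'" unfolding p_def using ne fJ' by (intro Max_in) auto
  then obtain l0 where l0: "l0 \<in> J'" "p = piv (f l0)" by auto
  have le: "piv (f l) \<le> p" if "l \<in> J'" for l unfolding p_def using fJ' that by (intro Max_ge) auto
  have "0 = (\<Sum>l\<in>J. c l *s f l) $ p" using s by simp
  also have "\<dots> = (\<Sum>l\<in>J. c l * f l $ p)" by simp
  also have "\<dots> = c l0 * f l0 $ p + (\<Sum>l\<in>J - {l0}. c l * f l $ p)"
    using l0 fin by (subst sum.remove[of J l0]) (auto simp: J'_def)
  also have "(\<Sum>l\<in>J - {l0}. c l * f l $ p) = 0"
  proof (rule sum.neutral, rule ballI)
    fix l assume l: "l \<in> J - {l0}"
    show "c l * f l $ p = 0"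
    proof (cases "c l = 0")
      case False
      then have "l \<in> J'" using l by (auto simp: J'_def)
      then have "piv (f l) \<le> p" by (rule le)
      moreover have "piv (f l) \<noteq> p" using inj l l0 by (auto simp: J'_def inj_on_def)
      ultimately have "piv (f l) < p" by simp
      then show ?thesis by (simp add: piv_above)
    qed simp
  qed
  finally have "c l0 * f l0 $ p = 0" by simp
  moreover have "c l0 \<noteq> 0" using l0 by (auto simp: J'_def)
  moreover have "f l0 $ p \<noteq> 0" using l0 nz piv_nz[of "f l0"] by (auto simp: J'_def)
  ultimately show False by simp
qed

lemma in_span_axis: fixes x :: "'a::field^'n"
  assumes "\<forall>i. x$i \<noteq> 0 \<longrightarrow> i \<in> S" shows "x \<in> vec.span ((\<lambda>i. axis i 1) ` S)"
proof -
  have "x = (\<Sum>i\<in>UNIV. x$i *s axis i 1)" by (simp add: basis_expansion)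
  also have "\<dots> = (\<Sum>i\<in>S. x$i *s axis i 1)"
    by (rule sum.mono_neutral_right) (use assms in auto)
  also have "\<dots> \<in> vec.span ((\<lambda>i. axis i 1) ` S)"
    by (intro vec.span_sum vec.span_scale vec.span_base) auto
  finally show ?thesis .
qed

lemma span_axis_in: fixes x :: "'a::field^'n"
  assumes "x \<in> vec.span ((\<lambda>i. axis i 1) ` S)" "x$i \<noteq> 0" shows "i \<in> S"
proof -
  have "vec.span ((\<lambda>i. axis i 1) ` S) \<subseteq> {y. \<forall>i. y$i \<noteq> 0 \<longrightarrow> i \<in> S}"
    apply (rule vec.span_minimal)
     apply (auto simp: vec.subspace_def axis_def split: if_splits)
    by (metis add.left_neutral)
  then show ?thesis using assms by auto
qed

lemma ut_diag: fixes V :: "'a::field^'n::{finite,linorder}^'n::{finite,linorder}"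
  assumes ut: "upper_triangular V" and iv: "invertible V" shows "V$m$m \<noteq> 0"
proof
  assume z: "V$m$m = 0"
  let ?B = "(\<lambda>i. axis i (1::'a)) ` {..m}"
  have inj: "inj ((*v) V)" using inj_matrix_vector_mult iv .
  have hom: "module_hom (*s) (*s) ((*v) V)"
    using matrix_vector_mul_linear_gen unfolding Vector_Spaces.linear_def by blast
  have indB: "vec.independent ?B"
    by (rule vec.independent_mono[OF independent_cart_basis]) (auto simp: cart_basis_def)
  have ind: "vec.independent ((*v) V ` ?B)"
    by (rule module_hom.independent_injective_image[OF hom indB]) (use inj in \<open>auto simp: inj_on_def\<close>)
  have sub: "(*v) V ` ?B \<subseteq> vec.span ((\<lambda>i. axis i 1) ` {..<m})"
  proof (rule subsetI)
    fix y assume "y \<in> (*v) V ` ?B"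
    then obtain k where k: "k \<in> {..m}" and y: "y = V *v axis k 1" by auto
    show "y \<in> vec.span ((\<lambda>i. axis i 1) ` {..<m})" unfolding y
    proof (rule in_span_axis, intro allI impI)
      fix i assume "(V *v axis k 1) $ i \<noteq> 0"
      then have nz: "V $ i $ k \<noteq> 0" by (simp add: mv_axis)
      then have "i \<le> k" using ut unfolding upper_triangular_def by (meson not_le)
      moreover have "i \<noteq> m" using nz z k \<open>i \<le> k\<close> by auto
      ultimately show "i \<in> {..<m}" using k by auto
    qed
  qed
  have "card ((*v) V ` ?B) \<le> card ((\<lambda>i. axis i (1::'a)) ` {..<m})"
    using vec.independent_span_bound[OF _ ind sub] by auto
  also have "\<dots> \<le> card {..<m}" by (rule card_image_le) auto
  finally have c1: "card ((*v) V ` ?B) \<le> card {..<m}" .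
  have "card ((*v) V ` ?B) = card ?B" using inj by (intro card_image) (auto simp: inj_on_def)
  also have "\<dots> = card {..m}" by (intro card_image) (auto simp: inj_on_def axis_eq_axis)
  also have "card {..m} = Suc (card {..<m})"
  proof -
    have "{..m} = insert m {..<m}" by auto
    then show ?thesis by simp
  qed
  finally have "card ((*v) V ` ?B) = Suc (card {..<m})" by simp
  with c1 show False by simp
qed


lemma mv_scale: "(A::'a::field^'n^'m) *v (c *s u) = c *s (A *v u)"
  by (simp add: matrix_vector_mult_def vec_eq_iff sum_distrib_left algebra_simps)

theorem lemma3p8:
  fixes N :: nat
    and D D' F V V\<phi> :: "('a::field)^'n::{finite,linorder}^'n::{finite,linorder}"
    and C C' :: "nat \<Rightarrow> ('a^'n::{finite,linorder}) set"
  assumes "filtration_cc N D C" and "filtration_cc N D' C'"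
    and "filt_compat_ordered_basis N C (\<lambda>j. axis j 1)"
    and "filt_compat_ordered_basis N C' (\<lambda>j. axis j 1)"
    and "inj_filt_morphism N D C D' C' F"
    and "invertible F"
    and "upper_triangular V" and "invertible V"
    and "upper_triangular V\<phi>" and "invertible V\<phi>"
    and "reduced (D ** V)"
    and "reduced ((matrix_inv F ** D') ** V\<phi>)"
  shows "let R = D ** V; R\<phi> = (matrix_inv F ** D') ** V\<phi>;
             Z = (\<lambda>t. (*v) F ` {x \<in> C t. D *v x = 0});
             I = {Inl j | j. column j (F ** R\<phi>) \<noteq> 0}
                 \<union> {Inr j | j. column j R = 0 \<and> j \<notin> pivs R\<phi>};
             z = (\<lambda>i. case i of Inl j \<Rightarrow> column j (F ** R\<phi>) | Inr j \<Rightarrow> F *v column j V)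
         in filt_compat_basis N Z I z
            \<and> (\<forall>i\<in>I. supp N Z (z i) = supp N C (matrix_inv F *v z i))"
proof -
  note A = assms
  define R where "R = D ** V"
  define Fi where "Fi = matrix_inv F"
  define Rp where "Rp = (Fi ** D') ** V\<phi>"
  define K where "K = (\<lambda>t. {x \<in> C t. D *v x = 0})"
  define Z where "Z = (\<lambda>t. (*v) F ` K t)"
  define I where "I = {Inl j | j. column j (F ** Rp) \<noteq> 0}
                 \<union> {Inr j | j. column j R = 0 \<and> j \<notin> pivs Rp}"
  define z where "z = (\<lambda>i. case i of Inl j \<Rightarrow> column j (F ** Rp) | Inr j \<Rightarrow> F *v column j V)"
  define w where "w = (\<lambda>i. case i of Inl j \<Rightarrow> column j Rp | Inr j \<Rightarrow> column j V)"
  have D2: "D ** D = 0" using A(1) unfolding filtration_cc_def chain_complex_def by blast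
  have FFi: "F ** Fi = mat 1" "Fi ** F = mat 1" using minv[OF A(6)] unfolding Fi_def by auto
  have comm: "F ** D = D' ** F" using A(5) unfolding inj_filt_morphism_def by blast
  have comm2: "Fi ** D' = D ** Fi"
  proof -
    have "Fi ** D' = Fi ** D' ** (F ** Fi)" by (simp add: FFi)
    also have "\<dots> = Fi ** (F ** D) ** Fi" by (simp add: comm matrix_mul_assoc)
    also have "\<dots> = D ** Fi" by (simp add: FFi matrix_mul_assoc)
    finally show ?thesis .
  qed
  have DRp: "D ** Rp = 0"
    unfolding Rp_def comm2 by (simp add: matrix_mul_assoc D2)
  have injF: "inj ((*v) F)" using inj_matrix_vector_mult A(6) .
  have FiF: "Fi *v (F *v x) = x" for x by (simp add: matrix_vector_mul_assoc FFi)
  have Vd: "V $ j $ j \<noteq> 0" for j using ut_diag A(7,8) by blast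
  have colV: "column j V $ k = V $ k $ j" for j k by (simp add: column_def)
  have pivV: "piv (column j V) = j" for j
    by (rule piv_eqI) (use Vd A(7) in \<open>auto simp: colV upper_triangular_def\<close>)
  have Vnz: "column j V \<noteq> 0" for j using Vd[of j] by (auto simp: vec_eq_iff colV)
  have zw: "z i = F *v w i" for i by (cases i) (auto simp: z_def w_def column_mult)
  have wFi: "Fi *v z i = w i" for i by (simp add: zw FiF)
  have memI: "i \<in> I \<longleftrightarrow> (\<exists>j. i = Inl j \<and> column j Rp \<noteq> 0) \<or> (\<exists>j. i = Inr j \<and> column j R = 0 \<and> j \<notin> pivs Rp)" for i
  proof -
    have "column j (F ** Rp) \<noteq> 0 \<longleftrightarrow> column j Rp \<noteq> 0" for j
      by (metis injF column_mult inj_eq matrix_vector_mult_0_right)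
    then show ?thesis by (auto simp: I_def)
  qed
  have Dw: "D *v w i = 0" if "i \<in> I" for i
  proof -
    have col0: "column k (0::'a^'n::{finite,linorder}^'n::{finite,linorder}) = 0" for k by (simp add: column_def vec_eq_iff)
    from that consider (l) j where "i = Inl j" | (r) j where "i = Inr j" "column j R = 0"
      unfolding memI by blast
    then show ?thesis
    proof cases
      case l
      have "D *v column j Rp = column j (D ** Rp)" by (simp add: column_mult)
      then show ?thesis using l DRp col0 by (simp add: w_def)
    next
      case r
      have "D *v column j V = column j R" by (simp add: column_mult R_def)
      then show ?thesis using r by (simp add: w_def)
    qed
  qed
  have wnz: "w i \<noteq> 0" if "i \<in> I" for i
    using that Vnz unfolding memI by (auto simp: w_def)
  have pivinj: "inj_on (\<lambda>i. piv (w i)) I"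
  proof (rule inj_onI)
    fix i i' assume i: "i \<in> I" and i': "i' \<in> I" and e: "piv (w i) = piv (w i')"
    have red: "reduced Rp" using A(12) unfolding Rp_def Fi_def .
    show "i = i'"
      using i i' e unfolding memI
      apply (auto simp: w_def pivV)
        apply (meson red reduced_def)
       apply (auto simp: pivs_def)
      done
  qed
  have winj: "inj_on w I" using pivinj by (auto simp: inj_on_def)
  \<comment> \<open>pivots of cycles are zero columns of R\<close>
  have rzero: "column (piv x) R = 0" if x0: "x \<noteq> 0" and Dx: "D *v x = 0" for x
  proof -
    define y where "y = matrix_inv V *v x"
    have Vy: "V *v y = x" unfolding y_def using minv[OF A(8)] by (simp add: matrix_vector_mul_assoc)
    have y0: "y \<noteq> 0" using Vy x0 by auto
    define m where "m = piv y"
    have ym: "y $ m \<noteq> 0" using piv_nz[OF y0] unfolding m_def .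
    have comp: "x $ k = (\<Sum>l\<in>UNIV. V $ k $ l * y $ l)" for k
      unfolding Vy[symmetric] by (simp add: matrix_vector_mult_def)
    have xk: "x $ k = 0" if "m < k" for k
      unfolding comp
    proof (rule sum.neutral, rule ballI)
      fix l show "V $ k $ l * y $ l = 0"
      proof (cases "y $ l = 0")
        case False
        then have "l \<le> m" using piv_le unfolding m_def by blast
        then have "l < k" using that by simp
        then show ?thesis using A(7) unfolding upper_triangular_def by simp
      qed simp
    qed
    have "x $ m = V $ m $ m * y $ m + (\<Sum>l\<in>UNIV - {m}. V $ m $ l * y $ l)"
      unfolding comp by (subst sum.remove[of UNIV m]) auto
    also have "(\<Sum>l\<in>UNIV - {m}. V $ m $ l * y $ l) = 0"
    proof (rule sum.neutral, rule ballI)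
      fix l assume l: "l \<in> UNIV - {m}"
      show "V $ m $ l * y $ l = 0"
      proof (cases "l < m")
        case True then show ?thesis using A(7) unfolding upper_triangular_def by simp
      next
        case False
        then have "m < l" using l by auto
        then show ?thesis using piv_above[of y l] unfolding m_def by simp
      qed
    qed
    finally have xm: "x $ m \<noteq> 0" using Vd[of m] ym by simp
    have pm: "piv x = m" by (rule piv_eqI[OF xm xk])
    define KS where "KS = {l. column l R \<noteq> 0}"
    have "0 = R *v y" unfolding R_def using Dx Vy by (simp add: matrix_vector_mul_assoc[symmetric])
    also have "\<dots> = (\<Sum>l\<in>UNIV. y $ l *s column l R)" by (rule matrix_mult_sum)
    also have "\<dots> = (\<Sum>l\<in>KS. y $ l *s column l R)"
      by (rule sum.mono_neutral_right) (auto simp: KS_def)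
    finally have s: "(\<Sum>l\<in>KS. y $ l *s column l R) = 0" by simp
    have "\<forall>l\<in>KS. y $ l = 0"
      by (rule piv_indep[OF _ _ _ s]) (use A(11) in \<open>auto simp: KS_def R_def reduced_def inj_on_def\<close>)
    then have "m \<notin> KS" using ym by auto
    then show ?thesis using pm by (simp add: KS_def)
  qed
  \<comment> \<open>structure of the filtration C\<close>
  have Cspan: "vec.span ((\<lambda>j. axis j 1) ` {j. axis j 1 \<in> C t}) = C t" if "t \<le> N" for t
    using A(3) that unfolding filt_compat_ordered_basis_def filt_compat_basis_def by auto
  have Csub: "vec.subspace (C t)" if "t \<le> N" for t
    using A(1) that unfolding filtration_cc_def by blast
  have down: "axis k 1 \<in> C t" if "t \<le> N" "k \<le> k'" "axis k' 1 \<in> C t" for t k k'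
  proof -
    have "supp N C (axis k' 1) \<subseteq> supp N C (axis k 1)"
      using A(3) that(2) unfolding filt_compat_ordered_basis_def by blast
    then show ?thesis using that unfolding supp_def by blast
  qed
  have memC: "x \<in> C t \<longleftrightarrow> axis (piv x) 1 \<in> C t" if "t \<le> N" "x \<noteq> 0" for t x
  proof
    assume "x \<in> C t"
    then have "x \<in> vec.span ((\<lambda>j. axis j 1) ` {j. axis j 1 \<in> C t})" using Cspan[OF that(1)] by simp
    then show "axis (piv x) 1 \<in> C t" using span_axis_in piv_nz[OF that(2)] by blast
  next
    assume p: "axis (piv x) 1 \<in> C t"
    have "x \<in> vec.span ((\<lambda>j. axis j 1) ` {j. axis j 1 \<in> C t})"
      by (rule in_span_axis) (use p down[OF that(1)] piv_le in blast)
    then show "x \<in> C t" using Cspan[OF that(1)] by simp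
  qed
  have Ksub: "vec.subspace (K t)" if "t \<le> N" for t
    using Csub[OF that] unfolding vec.subspace_def K_def
    by (auto simp: matrix_vector_right_distrib mv_scale)
  \<comment> \<open>spanning by reduction\<close>
  have spanK: "x \<in> vec.span (w ` {i\<in>I. w i \<in> K t})" if "t \<le> N" "x \<in> K t" for t x
    using that(2)
  proof (induction x rule: measure_induct_rule[where f="\<lambda>x. if x = 0 then 0 else Suc (card {k. k < piv x})"])
    case (less x)
    show ?case
    proof (cases "x = 0")
      case True then show ?thesis by (simp add: vec.span_zero)
    next
      case x0: False
      define p where "p = piv x"
      have xK: "x \<in> C t" "D *v x = 0" using less.prems by (auto simp: K_def)
      have pC: "axis p 1 \<in> C t" using memC[OF that(1) x0] xK unfolding p_def by simp
      obtain i where i: "i \<in> I" "piv (w i) = p"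
      proof (cases "p \<in> pivs Rp")
        case True
        then obtain j where "column j Rp \<noteq> 0" "piv (column j Rp) = p" by (auto simp: pivs_def)
        then show ?thesis using that[of "Inl j"] by (auto simp: memI w_def)
      next
        case False
        have "column p R = 0" using rzero[OF x0 xK(2)] unfolding p_def .
        then show ?thesis using that[of "Inr p"] False by (auto simp: memI w_def pivV)
      qed
      define u where "u = w i"
      have u0: "u \<noteq> 0" using wnz i unfolding u_def by blast
      have uK: "u \<in> K t" using memC[OF that(1) u0] pC i Dw unfolding K_def u_def by auto
      have uG: "u \<in> w ` {i\<in>I. w i \<in> K t}" using uK i unfolding u_def by auto
      define c where "c = x $ p / u $ p"
      have up: "u $ p \<noteq> 0" using piv_nz[OF u0] i unfolding u_def by simp
      define x' where "x' = x - c *s u"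
      have x'K: "x' \<in> K t"
        unfolding x'_def by (rule vec.subspace_diff[OF Ksub[OF that(1)] less.prems vec.subspace_scale[OF Ksub[OF that(1)] uK]])
      have x'z: "x' $ k = 0" if "p \<le> k" for k
      proof (cases "k = p")
        case True then show ?thesis using up by (simp add: x'_def c_def)
      next
        case False
        then have "p < k" using that by simp
        then show ?thesis using piv_above[of x k] piv_above[of u k] i
          by (simp add: x'_def p_def u_def)
      qed
      have lt: "(if x' = 0 then 0 else Suc (card {k. k < piv x'})) < (if x = 0 then 0 else Suc (card {k. k < piv x}))"
      proof (cases "x' = 0")
        case False
        have "piv x' < p"
        proof (rule ccontr)
          assume "\<not> piv x' < p"
          then have "p \<le> piv x'" by simp
          then show False using piv_nz[OF False] x'z by blast
        qed
        then have "{k. k < piv x'} \<subset> {k. k < p}"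
          by (intro psubsetI subsetI) (auto dest: less_trans)
        then have "card {k. k < piv x'} < card {k. k < p}" by (rule psubset_card_mono[rotated]) simp
        then show ?thesis using False x0 by (simp add: p_def)
      qed (use x0 in simp)
      have "x' \<in> vec.span (w ` {i\<in>I. w i \<in> K t})" by (rule less.IH[OF lt x'K])
      moreover have "x = x' + c *s u" by (simp add: x'_def)
      moreover have "c *s u \<in> vec.span (w ` {i\<in>I. w i \<in> K t})"
        by (rule vec.span_scale[OF vec.span_base[OF uG]])
      ultimately show ?thesis by (metis vec.span_add)
    qed
  qed
  have zZ: "z i \<in> Z t \<longleftrightarrow> w i \<in> K t" for i t
    using injF by (auto simp: zw Z_def inj_on_def)
  have hom: "module_hom (*s) (*s) ((*v) F)"
    using matrix_vector_mul_linear_gen unfolding Vector_Spaces.linear_def by blast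
  have main: "filt_compat_basis N Z I z \<and> (\<forall>i\<in>I. supp N Z (z i) = supp N C (Fi *v z i))"
  proof (intro conjI ballI)
    show "filt_compat_basis N Z I z"
      unfolding filt_compat_basis_def
    proof (intro conjI allI impI)
      show "inj_on z I" using winj injF by (auto simp: zw inj_on_def)
      fix t assume t: "t \<le> N"
      define H where "H = {i\<in>I. w i \<in> K t}"
      have HH: "{i\<in>I. z i \<in> Z t} = H" by (auto simp: zZ H_def)
      have zH: "z ` H = (*v) F ` (w ` H)" by (auto simp: zw image_image)
      have indw: "vec.independent (w ` H)"
        unfolding vec.independent_explicit_module
      proof (intro allI impI)
        fix T u v assume T: "finite T" "T \<subseteq> w ` H" "(\<Sum>v\<in>T. u v *s v) = 0" "v \<in> T"
        have "\<forall>v\<in>T. u v = 0"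
        proof (rule piv_indep[where f="\<lambda>v. v", OF T(1) _ _ T(3)])
          show "\<forall>l\<in>T. l \<noteq> 0" using T(2) wnz by (auto simp: H_def)
          show "inj_on piv T"
          proof (rule inj_onI)
            fix a b assume ab: "a \<in> T" "b \<in> T" "piv a = piv b"
            then obtain i i' where ii: "i \<in> H" "i' \<in> H" "a = w i" "b = w i'" using T(2) by blast
            then have "i = i'" using pivinj ab(3) unfolding inj_on_def H_def by blast
            then show "a = b" using ii by simp
          qed
        qed
        then show "u v = 0" using T(4) by blast
      qed
      have spw: "vec.span (w ` H) = K t"
      proof
        show "vec.span (w ` H) \<subseteq> K t"
          by (rule vec.span_minimal[OF _ Ksub[OF t]]) (auto simp: H_def)
        show "K t \<subseteq> vec.span (w ` H)" using spanK[OF t] unfolding H_def by blast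
      qed
      show "vec.independent (z ` {i\<in>I. z i \<in> Z t})"
        unfolding HH zH
        by (rule module_hom.independent_injective_image[OF hom indw]) (use injF in \<open>auto simp: inj_on_def\<close>)
      show "vec.span (z ` {i\<in>I. z i \<in> Z t}) = Z t"
        unfolding HH zH module_hom.span_image[OF hom] spw by (simp add: Z_def)
    qed
  next
    fix i assume i: "i \<in> I"
    show "supp N Z (z i) = supp N C (Fi *v z i)"
      using Dw[OF i] by (auto simp: supp_def wFi zZ K_def)
  qed
  show ?thesis
    using main unfolding Let_def R_def Rp_def Fi_def K_def Z_def I_def z_def .
qed

end
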